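(* Let $m\ge1$ and let $q$ be an indeterminate. Over $\mathbb{Q}(q)$, with $m\times m$ matrices indexed by $[0,m-1]$, let $V_q=(q^{ij})_{i,j}$, $G_q=\bigl(\begin{bmatrix}i\\ j\end{bmatrix}\bigr)_{i,j}$ and $D_q$ the diagonal matrix with $i$th entry $[i]!\,(q-1)^i\,q^{\binom{i}{2}}$. Then \[ V_q\,(G_q^{-1})^{\mathrm T}=G_q\,D_q . \]
   Context: For integers $i\ge0$, $j\in\mathbb{Z}$: $[i]=(q^i-1)/(q-1)$, $[i]!=\prod_{k=1}^i[k]$, and $\begin{bmatrix}i\\ j\end{bmatrix}=[i]!/([j]![i-j]!)$ if $j\in[0,i]$, $0$ otherwise. $G_q$ is invertible (lower unitriangular); $^{\mathrm T}$ denotes transpose. *)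

theory Defs
  imports "HOL-Computational_Algebra.Polynomial" "HOL-Computational_Algebra.Fraction_Field"
    "Jordan_Normal_Form.Matrix"
begin

definition qvar :: "rat poly fract" where
  "qvar = Fract [:0, 1:] 1"

definition qint :: "'a::field \<Rightarrow> nat \<Rightarrow> 'a" where
  "qint q i = (q ^ i - 1) / (q - 1)"

definition qfact :: "'a::field \<Rightarrow> nat \<Rightarrow> 'a" where
  "qfact q i = (\<Prod>k\<in>{1..i}. qint q k)"

definition qbinom :: "'a::field \<Rightarrow> nat \<Rightarrow> int \<Rightarrow> 'a" where
  "qbinom q i j = (if 0 \<le> j \<and> j \<le> int i
     then qfact q i / (qfact q (nat j) * qfact q (i - nat j)) else 0)"

definition Vq :: "nat \<Rightarrow> rat poly fract mat" where
  "Vq m = mat m m (\<lambda>(i, j). qvar ^ (i * j))"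

definition Gq :: "nat \<Rightarrow> rat poly fract mat" where
  "Gq m = mat m m (\<lambda>(i, j). qbinom qvar i (int j))"

definition Dq :: "nat \<Rightarrow> rat poly fract mat" where
  "Dq m = mat m m (\<lambda>(i, j). if i = j
      then qfact qvar i * (qvar - 1) ^ i * qvar ^ (i choose 2) else 0)"

end

theory Submission imports Defs "Jordan_Normal_Form.Determinant" begin

lemma qvar_pow: "qvar ^ k = Fract ([:0,1:]^k) 1"
  by (induction k) (auto simp: qvar_def One_fract_def)

lemma qvar_pow_ne1: "k \<ge> 1 \<Longrightarrow> qvar ^ k \<noteq> 1"
proof
  assume k: "k \<ge> 1" and h: "qvar ^ k = 1"
  hence "Fract ([:0,1:]^k) 1 = Fract (1::rat poly) 1" by (simp add: qvar_pow One_fract_def)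
  hence "([:0,1:]::rat poly)^k = 1" by (simp add: eq_fract)
  hence "degree (([:0,1:]::rat poly)^k) = 0" by simp
  moreover have "degree (([:0,1:]::rat poly)^k) = k" by (simp add: degree_power_eq)
  ultimately show False using k by simp
qed

lemma qvar_ne1: "qvar \<noteq> 1" using qvar_pow_ne1[of 1] by simp

lemma qint_nz: "k \<ge> 1 \<Longrightarrow> qint qvar k \<noteq> 0"
  using qvar_pow_ne1 qvar_ne1 by (simp add: qint_def)

lemma qfact_nz: "qfact qvar k \<noteq> 0"
  unfolding qfact_def using qint_nz by (simp)

lemma qfact_Suc: "qfact q (Suc n) = qfact q n * qint q (Suc n)"
  unfolding qfact_def by (simp add: prod.nat_ivl_Suc' mult.commute)

lemma qfact_0[simp]: "qfact q 0 = 1" by (simp add: qfact_def)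

lemma qint_add: "(q::'a::field) \<noteq> 1 \<Longrightarrow> qint q a + q^a * qint q b = qint q (a+b)"
proof -
  assume "q \<noteq> 1"
  hence "q - 1 \<noteq> 0" by simp
  have "qint q a + q^a*qint q b = ((q^a - 1) + q^a*(q^b-1))/(q-1)"
    by (simp add: qint_def add_divide_distrib times_divide_eq_right)
  also have "\<dots> = (q^(a+b)-1)/(q-1)" by (simp add: power_add algebra_simps)
  finally show ?thesis by (simp add: qint_def)
qed

fun gb :: "'a::field \<Rightarrow> nat \<Rightarrow> nat \<Rightarrow> 'a" where
  "gb q 0 k = (if k = 0 then 1 else 0)"
| "gb q (Suc n) k = (if k = 0 then 1 else gb q n (k-1) + q^k * gb q n k)"

lemma gb_0[simp]: "gb q n 0 = 1" by (cases n) auto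

lemma gb_zero: "k > n \<Longrightarrow> gb q n k = 0"
  by (induction n arbitrary: k) auto

lemma gb_fact: "k \<le> n \<Longrightarrow> (q::'a::field) \<noteq> 1 \<Longrightarrow> gb q n k * qfact q k * qfact q (n-k) = qfact q n"
proof (induction n arbitrary: k)
  case 0 then show ?case by simp
next
  case (Suc n)
  show ?case
  proof (cases k)
    case 0 then show ?thesis by simp
  next
    case (Suc k')
    have A: "gb q n k' * qfact q (Suc k') * qfact q (n-k') = qfact q n * qint q (Suc k')"
    proof -
      have "gb q n k' * qfact q (Suc k') * qfact q (n-k') = (gb q n k' * qfact q k' * qfact q (n-k')) * qint q (Suc k')"
        by (simp add: qfact_Suc algebra_simps)
      also have "\<dots> = qfact q n * qint q (Suc k')" using Suc.IH[of k'] Suc.prems \<open>k = Suc k'\<close> by simp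
      finally show ?thesis .
    qed
    have B: "q^(Suc k') * gb q n (Suc k') * qfact q (Suc k') * qfact q (n-k') = q^(Suc k') * qfact q n * qint q (n - k')"
    proof (cases "Suc k' \<le> n")
      case True
      have "n - k' = Suc (n - Suc k')" using True by simp
      hence "qfact q (n-k') = qfact q (n - Suc k') * qint q (n-k')" by (simp add: qfact_Suc)
      then show ?thesis using Suc.IH[OF True] Suc.prems by (simp add: algebra_simps)
    next
      case False
      then have "n - k' = 0" by simp
      moreover have "gb q n (Suc k') = 0" by (rule gb_zero) (use False in simp)
      ultimately show ?thesis by (simp add: qint_def)
    qed
    have "gb q (Suc n) k * qfact q k * qfact q (Suc n - k)
       = gb q n k' * qfact q (Suc k') * qfact q (n-k') + q^(Suc k') * gb q n (Suc k') * qfact q (Suc k') * qfact q (n-k')"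
      using \<open>k = Suc k'\<close> by (simp add: algebra_simps)
    also have "\<dots> = qfact q n * (qint q (Suc k') + q^(Suc k') * qint q (n-k'))"
      using A B by (simp add: algebra_simps)
    also have "\<dots> = qfact q n * qint q (Suc n)"
      using qint_add[OF Suc.prems(2), of "Suc k'" "n-k'"] Suc.prems(1) \<open>k = Suc k'\<close> by simp
    finally show ?thesis by (simp add: qfact_Suc)
  qed
qed

lemma gb_qbinom: "qbinom qvar n (int k) = gb qvar n k"
proof (cases "k \<le> n")
  case True
  show ?thesis using gb_fact[OF True qvar_ne1] True qfact_nz[of k] qfact_nz[of "n-k"]
    by (simp add: qbinom_def field_simps)
next
  case False then show ?thesis by (simp add: qbinom_def gb_zero)
qed

lemma qnewton: "(x::'a::field)^j = (\<Sum>k\<le>j. gb q j k * (\<Prod>l<k. x - q^l))"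
proof (induction j)
  case 0 then show ?case by simp
next
  case (Suc j)
  define P where "P k = (\<Prod>l<k. x - q^l)" for k
  have P0: "P 0 = 1" by (simp add: P_def)
  have PS: "x * P k = P (Suc k) + q^k * P k" for k by (simp add: P_def algebra_simps)
  have gz: "gb q j (Suc j) = 0" by (rule gb_zero) simp
  define S1 where "S1 = (\<Sum>k\<le>j. gb q j k * P (Suc k))"
  define S2 where "S2 = (\<Sum>k\<le>j. gb q j (Suc k) * q^(Suc k) * P (Suc k))"
  have "x^Suc j = x * (\<Sum>k\<le>j. gb q j k * P k)"
    using Suc.IH by (simp add: P_def)
  also have "\<dots> = (\<Sum>k\<le>Suc j. gb q j k * (x * P k))"
    using gz by (simp add: sum_distrib_left algebra_simps)
  also have "\<dots> = (\<Sum>k\<le>Suc j. gb q j k * P (Suc k)) + (\<Sum>k\<le>Suc j. gb q j k * q^k * P k)"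
    by (simp add: PS algebra_simps sum.distrib)
  also have "(\<Sum>k\<le>Suc j. gb q j k * P (Suc k)) = S1"
    using gz by (simp add: S1_def)
  also have "(\<Sum>k\<le>Suc j. gb q j k * q^k * P k) = 1 + S2"
    unfolding S2_def by (subst sum.atMost_Suc_shift) (simp add: P0)
  finally have L: "x^Suc j = S1 + (1 + S2)" .
  have "(\<Sum>k\<le>Suc j. gb q (Suc j) k * P k) = 1 + (\<Sum>k\<le>j. (gb q j k + q^(Suc k) * gb q j (Suc k)) * P (Suc k))"
    by (subst sum.atMost_Suc_shift) (simp add: P0)
  also have "\<dots> = 1 + (S1 + S2)"
    unfolding S1_def S2_def by (simp add: sum.distrib algebra_simps)
  finally have R: "(\<Sum>k\<le>Suc j. gb q (Suc j) k * P k) = 1 + (S1 + S2)" .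
  show ?case using L R by (simp add: P_def algebra_simps)
qed

lemma choose2_Suc: "Suc k choose 2 = k + (k choose 2)"
  by (simp add: numeral_2_eq_2)

lemma Pq: "(q::'a::field) \<noteq> 1 \<Longrightarrow> (\<Prod>l<k. q^i - q^l) = q^(k choose 2) * (q-1)^k * (\<Prod>l<k. qint q (i-l))"
proof (induction k)
  case 0 then show ?case by (simp add: numeral_2_eq_2)
next
  case (Suc k)
  show ?case
  proof (cases "i \<le> k")
    case True
    then have "i \<in> {..<Suc k}" by simp
    have "(\<Prod>l<Suc k. q^i - q^l) = 0"
      apply (rule prod_zero) apply simp apply (rule bexI[of _ i]) using True by auto
    moreover have "(\<Prod>l<Suc k. qint q (i-l)) = 0"
      apply (rule prod_zero) apply simp apply (rule bexI[of _ i]) using True by (auto simp: qint_def)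
    ultimately show ?thesis by (metis mult_zero_right)
  next
    case False
    have "q^i - q^k = q^k * (q - 1) * qint q (i-k)"
    proof -
      have "q - 1 \<noteq> 0" using Suc.prems by simp
      hence "(q-1) * qint q (i-k) = q^(i-k) - 1" by (simp add: qint_def)
      moreover have "q^k * q^(i-k) = q^i" using False by (simp add: power_add[symmetric])
      ultimately have h: "(q-1) * qint q (i-k) = q^(i-k) - 1" and hk: "q^k * q^(i-k) = q^i" by auto
      have "q^k * (q - 1) * qint q (i-k) = q^k * ((q-1) * qint q (i-k))" by (simp add: mult.assoc)
      also have "\<dots> = q^k * q^(i-k) - q^k" by (simp add: h right_diff_distrib)
      finally show ?thesis using hk by simp
    qed
    note E = this
    have "(\<Prod>l<Suc k. q^i - q^l) = (\<Prod>l<k. q^i - q^l) * (q^i - q^k)" by simp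
    also have "\<dots> = (q^(k choose 2) * (q-1)^k * (\<Prod>l<k. qint q (i-l))) * (q^k * (q - 1) * qint q (i-k))"
      by (simp only: Suc.IH[OF Suc.prems] E)
    also have "\<dots> = q^(k + (k choose 2)) * (q-1)^(Suc k) * ((\<Prod>l<k. qint q (i-l)) * qint q (i-k))"
      by (simp add: power_add mult_ac)
    also have "\<dots> = q^(Suc k choose 2) * (q-1)^(Suc k) * (\<Prod>l<Suc k. qint q (i-l))"
      by (simp add: choose2_Suc)
    finally show ?thesis .
  qed
qed

lemma qfact_split: "k \<le> i \<Longrightarrow> qfact q i = (\<Prod>l<k. qint q (i-l)) * qfact q (i-k)"
proof (induction k)
  case 0 then show ?case by simp
next
  case (Suc k)
  have e: "i - k = Suc (i - Suc k)" using Suc.prems by simp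
  have "qfact q (i-k) = qfact q (i - Suc k) * qint q (i-k)" by (metis e qfact_Suc)
  then show ?case using Suc by (simp add: algebra_simps)
qed

lemma Fbinom: "qfact qvar k * qbinom qvar i (int k) = (\<Prod>l<k. qint qvar (i-l))"
proof (cases "k \<le> i")
  case True
  show ?thesis using qfact_split[OF True, of qvar] qfact_nz[of k] qfact_nz[of "i-k"] True
    by (simp add: qbinom_def field_simps)
next
  case False
  then have "i \<in> {..<k}" by simp
  then have "(\<Prod>l<k. qint qvar (i-l)) = 0"
    by (auto intro!: prod_zero bexI[of _ i] simp: qint_def)
  then show ?thesis using False by (simp add: qbinom_def)
qed

definition dd :: "nat \<Rightarrow> rat poly fract" where
  "dd k = qfact qvar k * (qvar - 1) ^ k * qvar ^ (k choose 2)"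

lemma entry: "qvar^(i*j) = (\<Sum>k\<le>j. qbinom qvar i (int k) * dd k * qbinom qvar j (int k))"
proof -
  have "qvar^(i*j) = (qvar^i)^j" by (simp add: power_mult)
  also have "\<dots> = (\<Sum>k\<le>j. gb qvar j k * (\<Prod>l<k. qvar^i - qvar^l))" by (rule qnewton)
  also have "\<dots> = (\<Sum>k\<le>j. qbinom qvar i (int k) * dd k * qbinom qvar j (int k))"
  proof (rule sum.cong[OF refl])
    fix k
    have "(\<Prod>l<k. qvar^i - qvar^l) = qvar^(k choose 2) * (qvar-1)^k * (qfact qvar k * qbinom qvar i (int k))"
      using Pq[OF qvar_ne1, of i k] Fbinom[of k i] by simp
    then show "gb qvar j k * (\<Prod>l<k. qvar^i - qvar^l) = qbinom qvar i (int k) * dd k * qbinom qvar j (int k)"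
      by (simp add: gb_qbinom dd_def algebra_simps)
  qed
  finally show ?thesis .
qed

lemma GD: "Gq m * Dq m = mat m m (\<lambda>(i,k). Gq m $$ (i,k) * dd k)"
  by (rule eq_matI) (auto simp: Gq_def Dq_def dd_def scalar_prod_def row_def col_def
      if_distrib[where f="\<lambda>x. _ * x"] sum.delta' cong: if_cong)

lemma VGDG: "Vq m = Gq m * Dq m * transpose_mat (Gq m)"
proof (rule eq_matI)
  fix i j assume ij: "i < dim_row (Gq m * Dq m * transpose_mat (Gq m))" "j < dim_col (Gq m * Dq m * transpose_mat (Gq m))"
  then have i: "i < m" and j: "j < m" by (auto simp: Gq_def Dq_def)
  have "(Gq m * Dq m * transpose_mat (Gq m)) $$ (i,j) = (\<Sum>k<m. qbinom qvar i (int k) * dd k * qbinom qvar j (int k))"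
    using i j unfolding GD by (simp add: scalar_prod_def Gq_def lessThan_atLeast0)
  also have "\<dots> = (\<Sum>k\<le>j. qbinom qvar i (int k) * dd k * qbinom qvar j (int k))"
    using j by (intro sum.mono_neutral_right) (auto simp: qbinom_def)
  also have "\<dots> = qvar^(i*j)" by (rule entry[symmetric])
  finally show "Vq m $$ (i,j) = (Gq m * Dq m * transpose_mat (Gq m)) $$ (i,j)" using i j by (simp add: Vq_def)
qed (auto simp: Vq_def Gq_def Dq_def)

theorem lemma3p5:
  fixes m :: nat and Ginv :: "rat poly fract mat"
  assumes "m \<ge> 1"
    and "Ginv \<in> carrier_mat m m"
    and "Gq m * Ginv = 1\<^sub>m m"
  shows "Vq m * transpose_mat Ginv = Gq m * Dq m"
proof -
  have G: "Gq m \<in> carrier_mat m m" and D: "Dq m \<in> carrier_mat m m" by (auto simp: Gq_def Dq_def)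
  have I: "Ginv * Gq m = 1\<^sub>m m" by (rule mat_mult_left_right_inverse[OF G assms(2) assms(3)])
  have "Vq m * transpose_mat Ginv = (Gq m * Dq m) * (transpose_mat (Gq m) * transpose_mat Ginv)"
    using G D assms(2) by (simp add: VGDG assoc_mult_mat[of _ m m _ m _ m])
  also have "transpose_mat (Gq m) * transpose_mat Ginv = transpose_mat (Ginv * Gq m)"
    using G assms(2) by (simp add: transpose_mult)
  also have "\<dots> = 1\<^sub>m m" by (simp add: I)
  finally show ?thesis using G D by simp
qed

end
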